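(* For any graph $G$, $\mathrm{girth}(G)\le \mathrm{Abl}(G)/3$.
   Context: A graph is $G=(V_G,E_G,t_G,h_G)$ with vertex set, edge set and tail/head maps (loops and multiple edges allowed). Directed edges are pairs $(e,\pm)$, with $(e,+)$ going from $t(e)$ to $h(e)$ and $(e,-)$ its inverse. A walk of length $m\ge1$ is a sequence $(u_1,\dots,u_m)$ of directed edges with the head of $u_i$ equal to the tail of $u_{i+1}$; it is closed if its start and end vertices coincide, and non-backtracking if $u_{i+1}$ is never the inverse of $u_i$. The girth of $G$ is the length of its shortest closed non-backtracking walk (of positive length). The abelian girth $\mathrm{Abl}(G)$ is the minimum $m\ge1$ such that there is a closed non-backtracking walk $(u_1,\dots,u_m)$ in which, for every edge $e$, $(e,+)$ appears the same number of times as $(e,-)$ ($\infty$ if none exists). *)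

theory Defs
  imports Main "HOL-Library.Extended_Nat"
begin

text \<open>Directed edges are pairs (e, b) with b = True
  standing for (e,+) and b = False for (e,-).\<close>

definition is_graph :: "'v set \<Rightarrow> 'e set \<Rightarrow> ('e \<Rightarrow> 'v) \<Rightarrow> ('e \<Rightarrow> 'v) \<Rightarrow> bool" where
  "is_graph V E t h \<longleftrightarrow> (\<forall>e\<in>E. t e \<in> V \<and> h e \<in> V)"

definition dtail :: "('e \<Rightarrow> 'v) \<Rightarrow> ('e \<Rightarrow> 'v) \<Rightarrow> 'e \<times> bool \<Rightarrow> 'v" where
  "dtail t h u = (if snd u then t (fst u) else h (fst u))"

definition dhead :: "('e \<Rightarrow> 'v) \<Rightarrow> ('e \<Rightarrow> 'v) \<Rightarrow> 'e \<times> bool \<Rightarrow> 'v" where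
  "dhead t h u = (if snd u then h (fst u) else t (fst u))"

definition dinv :: "'e \<times> bool \<Rightarrow> 'e \<times> bool" where
  "dinv u = (fst u, \<not> snd u)"

definition is_walk :: "'e set \<Rightarrow> ('e \<Rightarrow> 'v) \<Rightarrow> ('e \<Rightarrow> 'v) \<Rightarrow> ('e \<times> bool) list \<Rightarrow> bool" where
  "is_walk E t h w \<longleftrightarrow> length w \<ge> 1 \<and> (\<forall>u\<in>set w. fst u \<in> E) \<and>
     (\<forall>i. Suc i < length w \<longrightarrow> dhead t h (w ! i) = dtail t h (w ! Suc i))"

definition is_closed_walk :: "'e set \<Rightarrow> ('e \<Rightarrow> 'v) \<Rightarrow> ('e \<Rightarrow> 'v) \<Rightarrow> ('e \<times> bool) list \<Rightarrow> bool" where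
  "is_closed_walk E t h w \<longleftrightarrow> is_walk E t h w \<and> dtail t h (hd w) = dhead t h (last w)"

definition non_backtracking :: "('e \<times> bool) list \<Rightarrow> bool" where
  "non_backtracking w \<longleftrightarrow> (\<forall>i. Suc i < length w \<longrightarrow> w ! Suc i \<noteq> dinv (w ! i))"

definition balanced :: "('e \<times> bool) list \<Rightarrow> bool" where
  "balanced w \<longleftrightarrow> (\<forall>e. count_list w (e, True) = count_list w (e, False))"

text \<open>Girth and abelian girth, valued in enat (\<infinity> = Inf of the empty set).\<close>
definition girth :: "'v set \<Rightarrow> 'e set \<Rightarrow> ('e \<Rightarrow> 'v) \<Rightarrow> ('e \<Rightarrow> 'v) \<Rightarrow> enat" where
  "girth V E t h = Inf {enat (length w) | w. is_closed_walk E t h w \<and> non_backtracking w}"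

definition abelian_girth :: "'v set \<Rightarrow> 'e set \<Rightarrow> ('e \<Rightarrow> 'v) \<Rightarrow> ('e \<Rightarrow> 'v) \<Rightarrow> enat" where
  "abelian_girth V E t h =
     Inf {enat (length w) | w. is_closed_walk E t h w \<and> non_backtracking w \<and> balanced w}"

end

theory Submission
  imports Defs
begin

lemma dinv_dinv[simp]: "dinv (dinv u) = u" by (simp add: dinv_def)
lemma dinv_neq[simp]: "dinv u \<noteq> u" by (cases u) (simp add: dinv_def)
lemma dhead_dinv[simp]: "dhead t h (dinv u) = dtail t h u" by (simp add: dinv_def dhead_def dtail_def)
lemma dtail_dinv[simp]: "dtail t h (dinv u) = dhead t h u" by (simp add: dinv_def dhead_def dtail_def)

lemma suc_mod_eq: assumes "Suc x mod m = Suc y mod m" shows "(x::nat) mod m = y mod m"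
proof (cases "m = 0")
  case True thus ?thesis using \<open>Suc x mod m = Suc y mod m\<close> by simp
next
  case False
  have "x mod m = (Suc x + (m - 1)) mod m" using False by simp
  also have "\<dots> = (Suc x mod m + (m - 1)) mod m" by (simp add: mod_add_left_eq)
  also have "\<dots> = (Suc y mod m + (m - 1)) mod m" using \<open>Suc x mod m = Suc y mod m\<close> by simp
  also have "\<dots> = (Suc y + (m - 1)) mod m" by (simp add: mod_add_left_eq)
  also have "\<dots> = y mod m" using False by simp
  finally show ?thesis .
qed

lemma exists_offset: "(m::nat) > 0 \<Longrightarrow> \<exists>c<m. (a + c) mod m = s mod m"
proof -
  assume m: "m > 0"
  define c where "c = (s + (m - a mod m)) mod m"
  have cm: "c < m" using m by (simp add: c_def)
  have e1: "(a + c) mod m = (a + (s + (m - a mod m))) mod m"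
    by (simp add: c_def mod_add_right_eq)
  have "a mod m \<le> m" using m by simp
  moreover have "a div m * m + a mod m = a" by simp
  ultimately have h: "a + (s + (m - a mod m)) = a div m * m + m + s" by linarith
  have "a div m * m + m + s = s + (a div m + 1) * m" by simp
  moreover have "(s + (a div m + 1) * m) mod m = s mod m" by (rule mod_mult_self1)
  ultimately have "(a div m * m + m + s) mod m = s mod m" by (simp only:)
  hence "(a + c) mod m = s mod m" using e1 h by (simp only:)
  thus ?thesis using cm by blast
qed

lemma comb:
  fixes W :: "nat \<Rightarrow> 'e \<times> bool"
  assumes m: "m > 0" and per: "\<And>j. W j = W (j mod m)"
    and C1: "\<And>j. dhead t h (W j) = dtail t h (W (Suc j))"
    and C2: "\<And>j. W (Suc j) \<noteq> dinv (W j)"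
    and bal: "\<And>j. \<exists>r. W r = dinv (W j)"
  shows "\<exists>a \<delta>. 1 \<le> \<delta> \<and> 3*\<delta> \<le> m \<and> dtail t h (W a) = dtail t h (W (a+\<delta>))"
proof -
  define D where "D j = dtail t h (W j)" for j
  have Dper: "D j = D (j mod m)" for j using per by (simp add: D_def)
  have Dm: "D (j + m) = D j" for j using Dper[of "j+m"] Dper[of j] by simp
  define P where "P \<delta> \<longleftrightarrow> 1 \<le> \<delta> \<and> (\<exists>a. D a = D (a+\<delta>))" for \<delta>
  have Pm: "P m" using m Dm unfolding P_def using Dm[of 0] by (intro conjI exI[of _ 0]) simp_all
  define d where "d = (LEAST x. P x)"
  have Pd: "P d" unfolding d_def by (rule LeastI[of P, OF Pm])
  have dle: "d \<le> m" unfolding d_def by (rule Least_le[of P, OF Pm])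
  have mini: "\<And>c a'. 1 \<le> c \<Longrightarrow> c < d \<Longrightarrow> D a' \<noteq> D (a'+c)"
    using not_less_Least[of _ P] unfolding d_def P_def by blast
  from Pd obtain a where d1: "1 \<le> d" and Da: "D a = D (a+d)" unfolding P_def by blast
  show ?thesis
  proof (rule ccontr)
    assume nc: "\<not> ?thesis"
    have "\<not> 3*d \<le> m" using nc d1 Da unfolding D_def by blast
    hence big: "3*d > m" by simp
    obtain r where r: "W r = dinv (W a)" using bal by blast
    have Hr: "D (Suc r) = D a" using C1[of r] r by (simp add: D_def)
    obtain c where cm: "c < m" and ac: "(a + c) mod m = Suc r mod m"
      using exists_offset[OF m] by blast
    have Dac: "D (a + c) = D a" using Dper[of "a+c"] Dper[of "Suc r"] ac Hr by simp
    consider "c = 0" | "0 < c \<and> c < d" | "c = d" | "d < c" by linarith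
    then show False
    proof cases
      case 1
      hence "W a = W (Suc r)" using per[of a] per[of "Suc r"] ac by simp
      thus False using C2[of r] r by simp
    next
      case 2 thus False using mini[of c a] Dac by simp
    next
      case 3
      have "Suc (a + d - 1) mod m = Suc r mod m" using 3 ac d1 by simp
      hence "(a+d-1) mod m = r mod m" by (rule suc_mod_eq)
      hence Wr: "W (a+d-1) = dinv (W a)" using per[of "a+d-1"] per[of r] r by simp
      have "D (Suc a) = D (a+d-1)" using C1[of a] Wr by (simp add: D_def)
      moreover have "d \<noteq> 1" proof
        assume "d = 1" hence "W a = dinv (W a)" using Wr by simp thus False by (metis dinv_neq)
      qed
      moreover have "d \<noteq> 2"
      proof
        assume "d = 2"
        hence "W (Suc a) = dinv (W a)" using Wr by (simp add: numeral_2_eq_2)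
        thus False using C2[of a] by simp
      qed
      ultimately have d3: "d \<ge> 3" and e: "D (Suc a) = D (a+d-1)" using d1 by auto
      have eq: "Suc a + (d - 2) = a + d - 1" using d3 by simp
      have "D (Suc a) = D (Suc a + (d - 2))" by (simp only: eq e)
      moreover have "1 \<le> d - 2" "d - 2 < d" using d3 by auto
      ultimately show False using mini[of "d-2" "Suc a"] by blast
    next
      case 4
      have "(a+d) + (c-d) = a + c" using 4 by simp
      hence "D (a+d) = D ((a+d) + (c-d))" using Dac Da by simp
      hence c1: "c - d \<ge> d"
      proof -
        assume "D (a+d) = D ((a+d) + (c-d))"
        moreover have "1 \<le> c - d" using 4 by simp
        ultimately show ?thesis using mini[of "c-d" "a+d"] by (cases "c - d < d") auto
      qed
      have "(a+c) + (m-c) = a + m" using cm by simp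
      hence "D (a+c) = D ((a+c) + (m - c))" using Dac Dm by simp
      moreover have "1 \<le> m - c" using cm by simp
      ultimately have "m - c \<ge> d" using mini[of "m-c" "a+c"] by (cases "m - c < d") auto
      thus False using c1 big cm by linarith
    qed
  qed
qed

lemma cyc_props:
  assumes cw: "is_closed_walk E t h w" and nb: "non_backtracking w"
    and wrap: "hd w \<noteq> dinv (last w)"
  shows "\<And>j. dhead t h (w ! (j mod length w)) = dtail t h (w ! (Suc j mod length w))"
    and "\<And>j. w ! (Suc j mod length w) \<noteq> dinv (w ! (j mod length w))"
proof -
  fix j
  define m where "m = length w"
  have m: "m \<ge> 1" using cw unfolding is_closed_walk_def is_walk_def m_def by simp
  define i where "i = j mod m"
  have im: "i < m" using m by (simp add: i_def)
  have W: "\<forall>i. Suc i < m \<longrightarrow> dhead t h (w ! i) = dtail t h (w ! Suc i)"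
    using cw unfolding is_closed_walk_def is_walk_def m_def by blast
  have ne: "w \<noteq> []" using m unfolding m_def by auto
  have Cl: "dtail t h (w ! 0) = dhead t h (w ! (m - 1))"
    using cw unfolding is_closed_walk_def m_def by (simp add: hd_conv_nth[OF ne] last_conv_nth[OF ne])
  have NB: "\<forall>i. Suc i < m \<longrightarrow> w ! Suc i \<noteq> dinv (w ! i)"
    using nb unfolding non_backtracking_def m_def by blast
  have wr: "w ! 0 \<noteq> dinv (w ! (m - 1))"
    using wrap unfolding m_def by (simp add: hd_conv_nth[OF ne] last_conv_nth[OF ne])
  show "dhead t h (w ! (j mod length w)) = dtail t h (w ! (Suc j mod length w))"
  proof (cases "Suc i < m")
    case True
    hence "Suc j mod m = Suc i" by (simp add: i_def mod_Suc)
    thus ?thesis using W True unfolding m_def[symmetric] i_def by simp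
  next
    case False
    hence "i = m - 1" "Suc j mod m = 0" using im by (auto simp: i_def mod_Suc)
    thus ?thesis using Cl unfolding m_def[symmetric] i_def by simp
  qed
  show "w ! (Suc j mod length w) \<noteq> dinv (w ! (j mod length w))"
  proof (cases "Suc i < m")
    case True
    hence "Suc j mod m = Suc i" by (simp add: i_def mod_Suc)
    thus ?thesis using NB True unfolding m_def[symmetric] i_def by simp
  next
    case False
    hence "i = m - 1" "Suc j mod m = 0" using im by (auto simp: i_def mod_Suc)
    thus ?thesis using wr unfolding m_def[symmetric] i_def by simp
  qed
qed

lemma seg_walk:
  fixes W :: "nat \<Rightarrow> 'e \<times> bool"
  assumes C1: "\<And>j. dhead t h (W j) = dtail t h (W (Suc j))"
    and C2: "\<And>j. W (Suc j) \<noteq> dinv (W j)"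
    and inE: "\<And>j. fst (W j) \<in> E"
    and d1: "1 \<le> d" and Da: "dtail t h (W a) = dtail t h (W (a + d))"
  shows "is_closed_walk E t h (map (\<lambda>k. W (a + k)) [0..<d]) \<and>
         non_backtracking (map (\<lambda>k. W (a + k)) [0..<d]) \<and>
         length (map (\<lambda>k. W (a + k)) [0..<d]) = d"
proof -
  define L where "L = map (\<lambda>k. W (a + k)) [0..<d]"
  have len: "length L = d" by (simp add: L_def)
  have nth: "\<And>i. i < d \<Longrightarrow> L ! i = W (a + i)" by (simp add: L_def)
  have wk: "is_walk E t h L"
    unfolding is_walk_def
  proof (intro conjI allI impI ballI)
    show "1 \<le> length L" using len d1 by simp
    fix u assume "u \<in> set L" thus "fst u \<in> E" using inE by (auto simp: L_def)
  next
    fix i assume "Suc i < length L"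
    thus "dhead t h (L ! i) = dtail t h (L ! Suc i)" using len nth C1[of "a+i"] by simp
  qed
  have hdL: "hd L = W a" using d1 by (simp add: L_def hd_map hd_upt)
  have "L \<noteq> []" using d1 len by auto
  hence "last L = L ! (d - 1)" using len by (simp add: last_conv_nth)
  hence lastL: "last L = W (a + (d - 1))" using nth d1 by simp
  have "Suc (a + (d - 1)) = a + d" using d1 by simp
  hence "dhead t h (last L) = dtail t h (W (a + d))" using lastL C1[of "a + (d - 1)"] by simp
  hence cl: "is_closed_walk E t h L" using wk hdL Da unfolding is_closed_walk_def by simp
  have "non_backtracking L" unfolding non_backtracking_def
    using len nth C2 by (metis Suc_lessD add_Suc_right)
  thus ?thesis using cl len unfolding L_def by blast
qed

lemma girth_le:
  "is_closed_walk E t h L \<Longrightarrow> non_backtracking L \<Longrightarrow> girth V E t h \<le> enat (length L)"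
  unfolding girth_def by (rule Inf_lower) blast

lemma cyclic_case:
  assumes cw: "is_closed_walk E t h w" and nb: "non_backtracking w" and bw: "balanced w"
    and wrap: "hd w \<noteq> dinv (last w)"
  shows "3 * girth V E t h \<le> enat (length w)"
proof -
  define m where "m = length w"
  define W where "W j = w ! (j mod m)" for j
  have m: "m > 0" using cw unfolding is_closed_walk_def is_walk_def m_def by auto
  have per: "W j = W (j mod m)" for j by (simp add: W_def)
  have C1: "dhead t h (W j) = dtail t h (W (Suc j))" for j
    using cyc_props(1)[OF cw nb wrap] unfolding W_def m_def by blast
  have C2: "W (Suc j) \<noteq> dinv (W j)" for j
    using cyc_props(2)[OF cw nb wrap] unfolding W_def m_def by blast
  have inset: "W j \<in> set w" for j using m unfolding W_def m_def by simp
  have inE: "fst (W j) \<in> E" for j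
    using inset[of j] cw unfolding is_closed_walk_def is_walk_def by blast
  have bal: "\<exists>r. W r = dinv (W j)" for j
  proof -
    obtain e b where u: "W j = (e, b)" by (cases "W j")
    have "count_list w (e, b) = count_list w (e, \<not> b)" using bw unfolding balanced_def
      by (cases b) auto
    moreover have "count_list w (e, b) \<noteq> 0" using inset[of j] u by (simp add: count_list_0_iff)
    ultimately have "(e, \<not> b) \<in> set w" by (simp add: count_list_0_iff)
    then obtain i where i: "i < m" "w ! i = (e, \<not> b)" unfolding m_def by (auto simp: in_set_conv_nth)
    hence "W i = dinv (W j)" using u by (simp add: W_def dinv_def)
    thus ?thesis by blast
  qed
  obtain a d where d: "1 \<le> d" "3 * d \<le> m" "dtail t h (W a) = dtail t h (W (a + d))"
    using comb[OF m per C1 C2 bal] by blast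
  from seg_walk[OF C1 C2 inE d(1) d(3)]
  have "girth V E t h \<le> enat d" using girth_le by metis
  hence "3 * girth V E t h \<le> 3 * enat d" by (rule mult_left_mono) simp
  also have "\<dots> = enat (3 * d)" by (simp add: numeral_eq_enat)
  also have "\<dots> \<le> enat m" using d(2) by simp
  finally show ?thesis unfolding m_def .
qed

lemma reduce:
  assumes cw: "is_closed_walk E t h w" and nb: "non_backtracking w" and bw: "balanced w"
    and wrap: "hd w = dinv (last w)"
  shows "\<exists>w'. is_closed_walk E t h w' \<and> non_backtracking w' \<and> balanced w' \<and> length w' < length w"
proof -
  have ne: "w \<noteq> []" using cw unfolding is_closed_walk_def is_walk_def by auto
  then obtain x v where wv: "w = x # v" by (cases w) auto
  have "v \<noteq> []"
  proof
    assume "v = []" hence "x = dinv x" using wrap wv by simp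
    thus False by (metis dinv_neq)
  qed
  then obtain w' y where vy: "v = w' @ [y]" by (metis append_butlast_last_id)
  have w: "w = x # w' @ [y]" using wv vy by simp
  have xy: "x = dinv y" using wrap w by simp
  define n where "n = length w'"
  have lw: "length w = Suc (Suc n)" using w n_def by simp
  have n0: "w ! 0 = x" using w by simp
  have nS: "\<And>i. i < n \<Longrightarrow> w ! Suc i = w' ! i" using w n_def by (simp add: nth_append)
  have nL: "w ! Suc n = y" using w n_def by (simp add: nth_append)
  have Wk: "\<forall>i. Suc i < length w \<longrightarrow> dhead t h (w ! i) = dtail t h (w ! Suc i)"
    using cw unfolding is_closed_walk_def is_walk_def by blast
  have NB: "\<forall>i. Suc i < length w \<longrightarrow> w ! Suc i \<noteq> dinv (w ! i)"
    using nb unfolding non_backtracking_def by blast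
  have "w' \<noteq> []"
  proof
    assume "w' = []"
    hence "w ! 1 = y" "n = 0" using w n_def by auto
    thus False using NB[rule_format, of 0] lw n0 xy by simp
  qed
  hence n1: "n \<ge> 1" using n_def by (cases w') auto
  have inE: "\<forall>u\<in>set w'. fst u \<in> E"
    using cw w unfolding is_closed_walk_def is_walk_def by auto
  have wk: "is_walk E t h w'" unfolding is_walk_def
  proof (intro conjI allI impI)
    show "1 \<le> length w'" using n1 n_def by simp
    show "\<forall>u\<in>set w'. fst u \<in> E" by (rule inE)
  next
    fix i assume i: "Suc i < length w'"
    hence "dhead t h (w ! Suc i) = dtail t h (w ! Suc (Suc i))" using Wk lw n_def by simp
    thus "dhead t h (w' ! i) = dtail t h (w' ! Suc i)" using nS i n_def by simp
  qed
  have "dtail t h (hd w') = dtail t h (w ! 1)" using nS[of 0] n1 \<open>w' \<noteq> []\<close> by (simp add: hd_conv_nth)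
  also have "\<dots> = dhead t h x" using Wk[rule_format, of 0] lw n0 by simp
  also have "\<dots> = dtail t h y" using xy by simp
  also have "\<dots> = dhead t h (w ! n)" using Wk[rule_format, of n] lw nL by simp
  also have "\<dots> = dhead t h (last w')" using nS[of "n - 1"] n1 \<open>w' \<noteq> []\<close> n_def
    by (simp add: last_conv_nth)
  finally have cl: "is_closed_walk E t h w'" using wk unfolding is_closed_walk_def by simp
  have nb': "non_backtracking w'" unfolding non_backtracking_def
  proof (intro allI impI)
    fix i assume i: "Suc i < length w'"
    hence "w ! Suc (Suc i) \<noteq> dinv (w ! Suc i)" using NB lw n_def by simp
    thus "w' ! Suc i \<noteq> dinv (w' ! i)" using nS i n_def by simp
  qed
  have bal': "balanced w'" unfolding balanced_def
  proof
    fix e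
    have "count_list w (e, True) = count_list w (e, False)" using bw unfolding balanced_def by blast
    thus "count_list w' (e, True) = count_list w' (e, False)"
      using w xy by (cases y) (auto simp: dinv_def split: if_splits)
  qed
  show ?thesis using cl nb' bal' lw n_def by auto
qed

lemma main:
  "is_closed_walk E t h w \<Longrightarrow> non_backtracking w \<Longrightarrow> balanced w \<Longrightarrow>
   3 * girth V E t h \<le> enat (length w)"
proof (induction "length w" arbitrary: w rule: less_induct)
  case less
  show ?case
  proof (cases "hd w = dinv (last w)")
    case True
    then obtain w' where w': "is_closed_walk E t h w'" "non_backtracking w'" "balanced w'"
      "length w' < length w" using reduce less.prems by blast
    have "3 * girth V E t h \<le> enat (length w')" using less.hyps w' by blast
    also have "\<dots> \<le> enat (length w)" using w'(4) by simp
    finally show ?thesis .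
  next
    case False thus ?thesis using cyclic_case less.prems by blast
  qed
qed

theorem theorem2p6:
  fixes V :: "'v set" and E :: "'e set" and t h :: "'e \<Rightarrow> 'v"
  assumes "is_graph V E t h"
  shows "3 * girth V E t h \<le> abelian_girth V E t h"
  unfolding abelian_girth_def
  by (rule Inf_greatest) (auto intro: main)

end
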